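(* Let $T$ be a tree. If $F$ is a minimal fort of $T$, then $F$ does not contain three distinct vertices $a, b, c$ with $a \sim b$ and $b \sim c$.
   Context: $u \sim v$ means $u$ and $v$ are adjacent. A fort of a graph $G$ is a nonempty set $F\subseteq V(G)$ such that every vertex outside $F$ is adjacent to either zero or at least two vertices of $F$; it is minimal if no proper subset is a fort. *)

theory Defs
  imports Main
begin

definition simple_graph :: "'a set \<Rightarrow> ('a \<Rightarrow> 'a \<Rightarrow> bool) \<Rightarrow> bool" where
  "simple_graph V E \<longleftrightarrow> finite V \<and> (\<forall>u v. E u v \<longrightarrow> u \<in> V \<and> v \<in> V)
     \<and> (\<forall>u v. E u v \<longrightarrow> E v u) \<and> (\<forall>v. \<not> E v v)"

definition is_walk :: "('a \<Rightarrow> 'a \<Rightarrow> bool) \<Rightarrow> 'a list \<Rightarrow> bool" where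
  "is_walk E p \<longleftrightarrow> p \<noteq> [] \<and> (\<forall>i. Suc i < length p \<longrightarrow> E (p ! i) (p ! Suc i))"

definition connected_graph :: "'a set \<Rightarrow> ('a \<Rightarrow> 'a \<Rightarrow> bool) \<Rightarrow> bool" where
  "connected_graph V E \<longleftrightarrow> V \<noteq> {} \<and>
     (\<forall>u\<in>V. \<forall>v\<in>V. \<exists>p. is_walk E p \<and> hd p = u \<and> last p = v)"

definition has_cycle :: "('a \<Rightarrow> 'a \<Rightarrow> bool) \<Rightarrow> bool" where
  "has_cycle E \<longleftrightarrow> (\<exists>p. is_walk E p \<and> distinct p \<and> length p \<ge> 3 \<and> E (last p) (hd p))"

definition is_tree :: "'a set \<Rightarrow> ('a \<Rightarrow> 'a \<Rightarrow> bool) \<Rightarrow> bool" where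
  "is_tree V E \<longleftrightarrow> simple_graph V E \<and> connected_graph V E \<and> \<not> has_cycle E"

definition is_fort :: "'a set \<Rightarrow> ('a \<Rightarrow> 'a \<Rightarrow> bool) \<Rightarrow> 'a set \<Rightarrow> bool" where
  "is_fort V E F \<longleftrightarrow> F \<noteq> {} \<and> F \<subseteq> V \<and>
     (\<forall>v \<in> V - F. card {u \<in> F. E v u} \<noteq> 1)"

definition is_minimal_fort :: "'a set \<Rightarrow> ('a \<Rightarrow> 'a \<Rightarrow> bool) \<Rightarrow> 'a set \<Rightarrow> bool" where
  "is_minimal_fort V E F \<longleftrightarrow> is_fort V E F \<and> (\<forall>F'. F' \<subset> F \<longrightarrow> \<not> is_fort V E F')"

end

theory Submission
  imports Defs
begin

fun wk :: "('a \<Rightarrow> 'a \<Rightarrow> bool) \<Rightarrow> 'a list \<Rightarrow> bool" where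
  "wk E [] = False"
| "wk E [x] = True"
| "wk E (x # y # r) = (E x y \<and> wk E (y # r))"

lemma is_walk_wk: "is_walk E p = wk E p"
proof (induction E p rule: wk.induct)
  case (1 E) then show ?case by (simp add: is_walk_def)
next
  case (2 E x) then show ?case by (simp add: is_walk_def)
next
  case (3 E x y r)
  have "is_walk E (x # y # r) = (E x y \<and> is_walk E (y # r))"
    unfolding is_walk_def
    by (auto simp: nth_Cons split: nat.splits)
  with 3 show ?case by simp
qed

lemma wk_snoc: "wk E p \<Longrightarrow> E (last p) u \<Longrightarrow> wk E (p @ [u])"
  by (induction E p rule: wk.induct) auto

lemma wk_Cons: "wk E (x # r) \<Longrightarrow> r \<noteq> [] \<Longrightarrow> wk E r"
  by (cases r) auto

lemma wk_suffix: "wk E (ys @ zs) \<Longrightarrow> zs \<noteq> [] \<Longrightarrow> wk E zs"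
  by (induction ys) (auto simp: Cons_eq_append_conv dest: wk_Cons)

lemma wk_distinct:
  "wk E p \<Longrightarrow> \<exists>q. wk E q \<and> distinct q \<and> hd q = hd p \<and> last q = last p \<and> set q \<subseteq> set p"
proof (induction p)
  case Nil then show ?case by simp
next
  case (Cons x r)
  show ?case
  proof (cases "r = []")
    case True then show ?thesis by (intro exI[of _ "[x]"]) auto
  next
    case False
    then obtain y r' where r: "r = y # r'" by (cases r) auto
    with Cons.prems have exy: "E x y" and wr: "wk E r" by auto
    from Cons.IH[OF wr] obtain q where q: "wk E q" "distinct q" "hd q = hd r" "last q = last r" "set q \<subseteq> set r"
      by blast
    have qne: "q \<noteq> []" using q(1) by (cases q) auto
    show ?thesis
    proof (cases "x \<in> set q")
      case False
      then obtain r2 where qq: "q = y # r2" using q(3) qne r by (cases q) auto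
      show ?thesis
        apply (intro exI[of _ "x # q"])
        using q False qq exy r False by auto
    next
      case True
      then obtain ys zs where qs: "q = ys @ x # zs" by (meson split_list)
      have "wk E (x # zs)" using wk_suffix[of E ys "x # zs"] q(1) qs by simp
      moreover have "distinct (x # zs)" using q(2) qs by simp
      moreover have "last (x # zs) = last (x # r)"
        using q(4) qs False by (cases zs) auto
      moreover have "set (x # zs) \<subseteq> set (x # r)" using q(5) qs by auto
      ultimately show ?thesis by (intro exI[of _ "x # zs"]) auto
    qed
  qed
qed

theorem mainTheorem5:
  fixes V :: "'a set" and E :: "'a \<Rightarrow> 'a \<Rightarrow> bool" and F :: "'a set"
  assumes "is_tree V E"
    and "is_minimal_fort V E F"
  shows "\<not> (\<exists>a b c. a \<in> F \<and> b \<in> F \<and> c \<in> F \<and> a \<noteq> b \<and> b \<noteq> c \<and> a \<noteq> c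
                   \<and> E a b \<and> E b c)"
proof
  assume "\<exists>a b c. a \<in> F \<and> b \<in> F \<and> c \<in> F \<and> a \<noteq> b \<and> b \<noteq> c \<and> a \<noteq> c \<and> E a b \<and> E b c"
  then obtain a b c where abc: "a \<in> F" "b \<in> F" "c \<in> F" "a \<noteq> b" "b \<noteq> c" "a \<noteq> c" "E a b" "E b c"
    by blast
  have sg: "simple_graph V E" and nc: "\<not> has_cycle E" using assms(1) unfolding is_tree_def by auto
  have fin: "finite V" and inV: "\<And>u v. E u v \<Longrightarrow> u \<in> V \<and> v \<in> V"
    and sym: "\<And>u v. E u v \<Longrightarrow> E v u" and irr: "\<And>v. \<not> E v v"
    using sg unfolding simple_graph_def by auto
  have fort: "is_fort V E F" and minl: "\<And>F'. F' \<subset> F \<Longrightarrow> \<not> is_fort V E F'"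
    using assms(2) unfolding is_minimal_fort_def by auto
  have FV: "F \<subseteq> V" and Fc: "\<And>v. v \<in> V - F \<Longrightarrow> card {u \<in> F. E v u} \<noteq> 1"
    using fort unfolding is_fort_def by auto
  define X where "X = {v. \<exists>p. wk E p \<and> hd p \<in> {a, c} \<and> last p = v \<and> b \<notin> set p}"
  have aX: "a \<in> X" unfolding X_def using abc by (intro CollectI exI[of _ "[a]"]) auto
  have cX: "c \<in> X" unfolding X_def using abc by (intro CollectI exI[of _ "[c]"]) auto
  have bX: "b \<notin> X" unfolding X_def
  proof
    assume "b \<in> {v. \<exists>p. wk E p \<and> hd p \<in> {a, c} \<and> last p = v \<and> b \<notin> set p}"
    then obtain p where "wk E p" "last p = b" "b \<notin> set p" by blast
    moreover have "p \<noteq> []" using calculation(1) by auto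
    ultimately show False using last_in_set by metis
  qed
  have ext: "u \<in> X" if "v \<in> X" "E v u" "u \<noteq> b" for u v
  proof -
    from that(1) obtain p where p: "wk E p" "hd p \<in> {a, c}" "last p = v" "b \<notin> set p"
      unfolding X_def by blast
    have "p \<noteq> []" using p(1) by auto
    then have "wk E (p @ [u]) \<and> hd (p @ [u]) \<in> {a, c} \<and> last (p @ [u]) = u \<and> b \<notin> set (p @ [u])"
      using wk_snoc[OF p(1)] p that by auto
    then show ?thesis unfolding X_def by blast
  qed
  have nocyc: False if "v \<in> X" "E v b" "v \<noteq> a" "v \<noteq> c" for v
  proof -
    from that(1) obtain p where p: "wk E p" "hd p \<in> {a, c}" "last p = v" "b \<notin> set p"
      unfolding X_def by blast
    from wk_distinct[OF p(1)] obtain q where q: "wk E q" "distinct q" "hd q = hd p"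
      "last q = last p" "set q \<subseteq> set p" by blast
    have qne: "q \<noteq> []" using q(1) by auto
    have bq: "b \<notin> set q" using q(5) p(4) by auto
    have "hd q \<noteq> last q" using q p that by auto
    then have lq: "length q \<ge> 2"
      using qne by (cases q; cases "tl q") auto
    have "wk E (q @ [b])" using wk_snoc[OF q(1)] q(4) p(3) that(2) by simp
    moreover have "distinct (q @ [b])" using q(2) bq by simp
    moreover have "length (q @ [b]) \<ge> 3" using lq by simp
    moreover have "E (last (q @ [b])) (hd (q @ [b]))"
      using qne q(3) p(2) abc sym by auto
    ultimately have "has_cycle E" unfolding has_cycle_def is_walk_wk by blast
    with nc show False by simp
  qed
  define F' where "F' = F \<inter> X"
  have "is_fort V E F'"
    unfolding is_fort_def
  proof (intro conjI ballI)
    show "F' \<noteq> {}" using aX abc unfolding F'_def by auto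
    show "F' \<subseteq> V" using FV unfolding F'_def by auto
  next
    fix v assume v: "v \<in> V - F'"
    show "card {u \<in> F'. E v u} \<noteq> 1"
    proof (cases "v = b")
      case True
      have sub: "{a, c} \<subseteq> {u \<in> F'. E v u}"
        using True abc aX cX sym unfolding F'_def by auto
      have "{u \<in> F'. E v u} \<subseteq> V" using inV by blast
      then have "finite {u \<in> F'. E v u}" using fin finite_subset by blast
      from card_mono[OF this sub] abc show ?thesis by simp
    next
      case False
      show ?thesis
      proof (cases "v \<in> X")
        case True
        then have vF: "v \<notin> F" using v unfolding F'_def by auto
        have "{u \<in> F'. E v u} = {u \<in> F. E v u}"
        proof
          show "{u \<in> F'. E v u} \<subseteq> {u \<in> F. E v u}" unfolding F'_def by auto
          show "{u \<in> F. E v u} \<subseteq> {u \<in> F'. E v u}"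
          proof
            fix u assume u: "u \<in> {u \<in> F. E v u}"
            have "u \<noteq> b"
            proof
              assume "u = b"
              then show False using nocyc[OF True] u vF abc by auto
            qed
            then show "u \<in> {u \<in> F'. E v u}" using ext[OF True] u unfolding F'_def by auto
          qed
        qed
        then show ?thesis using Fc[of v] v vF by auto
      next
        case vX: False
        have "{u \<in> F'. E v u} = {}"
        proof (rule ccontr)
          assume "{u \<in> F'. E v u} \<noteq> {}"
          then obtain u where "u \<in> X" "E v u" unfolding F'_def by auto
          then have "v \<in> X" using ext[of u v] sym False by blast
          with vX show False by simp
        qed
        then show ?thesis by (simp only: card.empty)
      qed
    qed
  qed
  moreover have "F' \<subset> F" using abc bX unfolding F'_def by auto
  ultimately show False using minl by blast
qed

end
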